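(* Let $M>0$, $g>0$, $U_{max}>0$ and $\epsilon>0$, and set $\gamma=\dfrac{\pi}{2\arctan(\epsilon U_{max})}$. For $f\in\mathbb{R}$ define $\bar\theta(f)=\sigma_{\pi/2}\big(\gamma\arctan(\epsilon f)\big)$ and $u_1(f)=\dfrac{f}{\sin\bar\theta(f)}$ for $f\neq 0$, $u_1(0)=\dfrac{1}{\gamma\epsilon}$. Let $\bar\alpha\in[0,\pi]$ be any steady-state inclination with $|Mg\cos\bar\alpha|\le U_{max}$, and let $\bar f_t=Mg\cos\bar\alpha$ be the corresponding steady-state tangential force. Then the steady-state thrust $\bar u_1=u_1(\bar f_t)$ satisfies $|\bar u_1|\le U_{max}$.
   Context: The saturation function is $\sigma_\lambda(x)=\operatorname{sign}(x)\min(|x|,\lambda)$ for $\lambda\ge 0$. Setting: a planar rigid object of inclination $\alpha$ (w.r.t. the horizon) is carried at one end by a ground vehicle and at the other end by a quadrotor producing thrust $u_1$ with constraint $0\le u_1\le U_{max}$; $M$ is the apparent mass of UAV and object and $g$ the gravitational acceleration. At an equilibrium with inclination $\bar\alpha$ the controller demands the tangential force $\bar f_t=Mg\cos\bar\alpha$, which is produced by choosing the relative UAV attitude $\bar\theta(\bar f_t)$ and thrust $u_1(\bar f_t)=\bar f_t/\sin\bar\theta(\bar f_t)$ (so that $u_1\sin\bar\theta=\bar f_t$). *)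

theory Defs
  imports Complex_Main
begin

definition sat :: "real \<Rightarrow> real \<Rightarrow> real" where
  "sat lam x = sgn x * min \<bar>x\<bar> lam"

definition gam :: "real \<Rightarrow> real \<Rightarrow> real" where
  "gam \<epsilon> Umax = pi / (2 * arctan (\<epsilon> * Umax))"

definition theta_bar :: "real \<Rightarrow> real \<Rightarrow> real \<Rightarrow> real" where
  "theta_bar \<epsilon> Umax f = sat (pi/2) (gam \<epsilon> Umax * arctan (\<epsilon> * f))"

definition u1 :: "real \<Rightarrow> real \<Rightarrow> real \<Rightarrow> real" where
  "u1 \<epsilon> Umax f = (if f = 0 then 1 / (gam \<epsilon> Umax * \<epsilon>)
                     else f / sin (theta_bar \<epsilon> Umax f))"

end

theory Submission
  imports Defs "HOL-Analysis.Complex_Transcendental"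
begin

lemma arctan_lower_bound':
  assumes "0 \<le> (x::real)"
  shows "x / (1 + x\<^sup>2) \<le> arctan x" (is "?l x \<le> _")
proof -
  have "?l x - arctan x \<le> ?l 0 - arctan 0"
    using assms
    by (intro DERIV_nonpos_imp_nonincreasing[where f="\<lambda>x. ?l x - arctan x"])
      (auto intro!: derivative_eq_intros simp: add_nonneg_eq_0_iff field_simps)
  thus ?thesis by simp
qed

lemma arctan_divide_mono': "0 < (x::real) \<Longrightarrow> x \<le> y \<Longrightarrow> arctan y / y \<le> arctan x / x"
  by (rule DERIV_nonpos_imp_nonincreasing[where f="\<lambda>x. arctan x / x"])
    (auto intro!: derivative_eq_intros divide_nonpos_nonneg
      simp: inverse_eq_divide arctan_lower_bound')

lemma arctan_mult_mono': "0 \<le> (x::real) \<Longrightarrow> x \<le> y \<Longrightarrow> x * arctan y \<le> y * arctan x"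
  using arctan_divide_mono'[of x y] by (cases "x = 0") (simp_all add: field_simps)

lemma xcos_le_sin:
  fixes x :: real assumes "0 \<le> x" "x \<le> pi"
  shows "x * cos x \<le> sin x"
proof -
  have "(\<lambda>x. sin x - x * cos x) 0 \<le> (\<lambda>x. sin x - x * cos x) x"
    using assms
  proof (intro DERIV_nonneg_imp_nondecreasing[where f="\<lambda>x. sin x - x * cos x"])
    fix z assume z: "0 \<le> z" "z \<le> x"
    show "\<exists>y. ((\<lambda>x. sin x - x * cos x) has_real_derivative y) (at z) \<and> 0 \<le> y"
    proof (intro exI conjI)
      show "((\<lambda>x. sin x - x * cos x) has_real_derivative (z * sin z)) (at z)"
        by (auto intro!: derivative_eq_intros)
      show "0 \<le> z * sin z" using z assms by (simp add: sin_ge_zero)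
    qed
  qed
  thus ?thesis by simp
qed

lemma sin_div_mono:
  fixes x y :: real assumes "0 < x" "x \<le> y" "y \<le> pi"
  shows "sin y / y \<le> sin x / x"
  using assms
  by (intro DERIV_nonpos_imp_nonincreasing[where f="\<lambda>x. sin x / x"])
     (auto intro!: derivative_eq_intros divide_nonpos_nonneg simp: xcos_le_sin mult.commute)

lemma jordan:
  fixes x :: real assumes "0 < x" "x \<le> pi/2"
  shows "2 / pi * x \<le> sin x"
proof -
  have "sin (pi/2) / (pi/2) \<le> sin x / x"
    using sin_div_mono[of x "pi/2"] assms by auto
  hence "2 / pi \<le> sin x / x" by simp
  thus ?thesis using assms by (simp add: field_simps)
qed

lemma sat_id: "\<bar>x\<bar> \<le> lam \<Longrightarrow> sat lam x = x"
  by (auto simp: sat_def sgn_if)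

lemma u1_pos:
  fixes Umax \<epsilon> f :: real
  assumes "Umax > 0" "\<epsilon> > 0" "0 < f" "f \<le> Umax"
  shows "\<bar>u1 \<epsilon> Umax f\<bar> \<le> Umax"
proof -
  define a where "a = arctan (\<epsilon> * Umax)"
  define t where "t = arctan (\<epsilon> * f)"
  have a0: "0 < a" using assms by (simp add: a_def)
  have api: "a < pi/2" using arctan_bounded a_def by auto
  have t0: "0 < t" using assms by (simp add: t_def)
  have ta: "t \<le> a" unfolding a_def t_def using assms by (simp add: arctan_le_iff)
  have g: "gam \<epsilon> Umax = pi / (2*a)" by (simp add: gam_def a_def)
  have gt0: "0 < pi / (2*a) * t" using a0 t0 by simp
  have gtle: "pi / (2*a) * t \<le> pi/2"
    using a0 ta by (simp add: field_simps)
  have th: "theta_bar \<epsilon> Umax f = pi / (2*a) * t"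
    unfolding theta_bar_def g t_def[symmetric] using gt0 gtle by (intro sat_id) simp
  have s: "t / a \<le> sin (pi / (2*a) * t)"
    using jordan[OF gt0 gtle] a0 by (simp add: field_simps)
  have mm: "\<epsilon> * f * a \<le> \<epsilon> * Umax * t"
    using arctan_mult_mono'[of "\<epsilon>*f" "\<epsilon>*Umax"] assms unfolding a_def t_def
    by (simp add: mult.commute)
  hence "f * a \<le> Umax * t" using assms by (simp add: mult.assoc)
  hence f1: "f \<le> Umax * (t / a)" using a0 by (simp add: field_simps)
  also have "\<dots> \<le> Umax * sin (pi / (2*a) * t)" using mult_left_mono[OF s] assms by simp
  finally have f2: "f \<le> Umax * sin (pi / (2*a) * t)" .
  have sp: "0 < sin (pi / (2*a) * t)" using f2 assms
    by (metis mult_pos_pos not_less order_less_le_trans zero_less_mult_pos)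
  have "u1 \<epsilon> Umax f = f / sin (pi / (2*a) * t)" using assms th by (simp add: u1_def)
  moreover have "f / sin (pi / (2*a) * t) \<le> Umax" using f2 sp by (simp add: field_simps)
  moreover have "0 \<le> f / sin (pi / (2*a) * t)" using sp assms by simp
  ultimately show ?thesis by simp
qed

lemma u1_neg: "u1 \<epsilon> Umax (-f) = u1 \<epsilon> Umax f"
  by (simp add: u1_def theta_bar_def sat_def arctan_minus sgn_minus)

lemma u1_zero:
  fixes Umax \<epsilon> :: real
  assumes "Umax > 0" "\<epsilon> > 0"
  shows "\<bar>u1 \<epsilon> Umax 0\<bar> \<le> Umax"
proof -
  define a where "a = arctan (\<epsilon> * Umax)"
  have a0: "0 < a" using assms by (simp add: a_def)
  have ale: "a \<le> \<epsilon> * Umax" unfolding a_def using assms by (simp add: arctan_le_self)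
  have "u1 \<epsilon> Umax 0 = 2 * a / (pi * \<epsilon>)" by (simp add: u1_def gam_def a_def[symmetric])
  moreover have "2 * a / (pi * \<epsilon>) \<le> Umax"
  proof -
    have "2 * a \<le> pi * \<epsilon> * Umax"
    proof -
      have "2 * a \<le> 2 * (\<epsilon> * Umax)" using ale by simp
      also have "\<dots> \<le> pi * (\<epsilon> * Umax)"
        using pi_gt3 assms by (intro mult_right_mono) auto
      finally show ?thesis by (simp add: mult.assoc)
    qed
    thus ?thesis using assms pi_gt_zero by (simp add: field_simps)
  qed
  moreover have "0 \<le> 2 * a / (pi * \<epsilon>)" using a0 assms by simp
  ultimately show ?thesis by simp
qed

theorem lemma2:
  fixes M g Umax \<epsilon> \<alpha> :: real
  assumes "M > 0" and "g > 0" and "Umax > 0" and "\<epsilon> > 0"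
    and "0 \<le> \<alpha>" and "\<alpha> \<le> pi"
    and "\<bar>M * g * cos \<alpha>\<bar> \<le> Umax"
  shows "\<bar>u1 \<epsilon> Umax (M * g * cos \<alpha>)\<bar> \<le> Umax"
proof -
  define f where "f = M * g * cos \<alpha>"
  have fb: "\<bar>f\<bar> \<le> Umax" using assms f_def by simp
  consider "f = 0" | "f > 0" | "f < 0" by linarith
  hence "\<bar>u1 \<epsilon> Umax f\<bar> \<le> Umax"
  proof cases
    case 1 thus ?thesis using u1_zero assms by simp
  next
    case 2 thus ?thesis using u1_pos[of Umax \<epsilon> f] assms fb by simp
  next
    case 3
    hence "\<bar>u1 \<epsilon> Umax (-f)\<bar> \<le> Umax" using u1_pos[of Umax \<epsilon> "-f"] assms fb by simp
    thus ?thesis by (simp add: u1_neg)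
  qed
  thus ?thesis by (simp add: f_def)
qed

end
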